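(* Let $(\mathcal{C},\otimes,\mathbf{1},a,\ell,r)$ be a monoidal category. Then $\mathcal{C}_q$, with the monoidal product $*$, unit $(\emptyset,\emptyset)$, identity unit constraints and associativity constraint $a_q$, is a monoidal category which is non-strict (whenever $\mathcal{C}$ has at least one object), even if $\mathcal{C}$ is strict; and the functor $j:\mathcal{C}\to\mathcal{C}_q$, $j(X)=((X),\bullet)$, equipped with the constraints $u:(\emptyset,\emptyset)\to((\mathbf{1}),\bullet)$ and $\eta_{X,Y}:((X,Y),\bullet\bullet)\to((X\otimes Y),\bullet)$ corresponding to $\mathrm{Id}_{\mathbf{1}}$ and $\mathrm{Id}_{X\otimes Y}$, is a strong monoidal functor and an equivalence of categories. Hence every monoidal category is monoidally equivalent to a non-strict monoidal category.
   Context: $\mathrm{Mag}(\bullet)$ is the free unital magma on one generator $\bullet$ (parenthesised words in $\bullet$, including the empty word $\emptyset$); $|t|$ is the number of bullets in $t$. Non-strictification $\mathcal{C}_q$: objects are pairs $(S,t)$ with $S$ a finite sequence of objects of $\mathcal{C}$ and $t\in\mathrm{Mag}(\bullet)$ with $|t|$ equal to the length of $S$. Parenthesisation: $\mathrm{Par}(\emptyset,\emptyset)=\mathbf{1}$, $\mathrm{Par}((X),\bullet)=X$, and for $|t|>1$ write uniquely $t=t_1t_2$ with $|t_1|,|t_2|\ge1$ and $S=S_1*S_2$ with $S_k$ of length $|t_k|$, and set $\mathrm{Par}(S,t)=\mathrm{Par}(S_1,t_1)\otimes\mathrm{Par}(S_2,t_2)$. Morphisms: $\mathrm{Hom}_{\mathcal{C}_q}((S,t),(S',t')):=\mathrm{Hom}_{\mathcal{C}}(\mathrm{Par}(S,t),\mathrm{Par}(S',t'))$.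 Monoidal product: $(S,t)*(S',t'):=(S*S',tt')$ (concatenation of sequences, magma product of words), with $(\emptyset,\emptyset)$ a strict two-sided unit; for nonempty factors $\mathrm{Par}((S,t)*(S',t'))=\mathrm{Par}(S,t)\otimes\mathrm{Par}(S',t')$ and for morphisms $f,g$ one sets $f*g:=f\otimes g$ (with the evident conjugation by the unit isomorphisms $\ell,r$ of $\mathcal{C}$ when a factor is $(\emptyset,\emptyset)$). Left and right unit constraints are identities. The associativity constraint $a_q:((S,t)*(S',t'))*(S'',t'')=(S*S'*S'',(tt')t'')\to(S*S'*S'',t(t't''))$ is the morphism with $\mathrm{Par}(a_q)=a_{\mathrm{Par}(S,t),\mathrm{Par}(S',t'),\mathrm{Par}(S'',t'')}$. A monoidal category is strict if its associativity and unit constraints are identities, and non-strict otherwise. *)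

theory Defs
  imports Main
begin

record ('o,'m) cat =
  obj :: "'o set"
  mor :: "'m set"
  dom :: "'m \<Rightarrow> 'o"
  cod :: "'m \<Rightarrow> 'o"
  cmp :: "'m \<Rightarrow> 'm \<Rightarrow> 'm"   (* cmp g f = g o f, for cod f = dom g *)
  idm :: "'o \<Rightarrow> 'm"

definition hom :: "('o,'m,'x) cat_scheme \<Rightarrow> 'o \<Rightarrow> 'o \<Rightarrow> 'm set" where
  "hom C A B = {f \<in> mor C. dom C f = A \<and> cod C f = B}"

definition category :: "('o,'m,'x) cat_scheme \<Rightarrow> bool" where
  "category C \<longleftrightarrow>
     (\<forall>f\<in>mor C. dom C f \<in> obj C \<and> cod C f \<in> obj C)
   \<and> (\<forall>A\<in>obj C. idm C A \<in> hom C A A)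
   \<and> (\<forall>f\<in>mor C. \<forall>g\<in>mor C. cod C f = dom C g \<longrightarrow> cmp C g f \<in> hom C (dom C f) (cod C g))
   \<and> (\<forall>f\<in>mor C. cmp C (idm C (cod C f)) f = f \<and> cmp C f (idm C (dom C f)) = f)
   \<and> (\<forall>f\<in>mor C. \<forall>g\<in>mor C. \<forall>h\<in>mor C. cod C f = dom C g \<and> cod C g = dom C h \<longrightarrow>
        cmp C h (cmp C g f) = cmp C (cmp C h g) f)"

definition iso :: "('o,'m,'x) cat_scheme \<Rightarrow> 'm \<Rightarrow> bool" where
  "iso C f \<longleftrightarrow> f \<in> mor C \<and> (\<exists>g\<in>hom C (cod C f) (dom C f).
      cmp C g f = idm C (dom C f) \<and> cmp C f g = idm C (cod C f))"

definition cinv :: "('o,'m,'x) cat_scheme \<Rightarrow> 'm \<Rightarrow> 'm" where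
  "cinv C f = (THE g. g \<in> hom C (cod C f) (dom C f) \<and>
      cmp C g f = idm C (dom C f) \<and> cmp C f g = idm C (cod C f))"

definition "functor" :: "('o,'m,'x) cat_scheme \<Rightarrow> ('p,'n,'y) cat_scheme \<Rightarrow>
    ('o \<Rightarrow> 'p) \<Rightarrow> ('m \<Rightarrow> 'n) \<Rightarrow> bool" where
  "functor C D Fo Fm \<longleftrightarrow> category C \<and> category D
   \<and> (\<forall>A\<in>obj C. Fo A \<in> obj D)
   \<and> (\<forall>f\<in>mor C. Fm f \<in> hom D (Fo (dom C f)) (Fo (cod C f)))
   \<and> (\<forall>A\<in>obj C. Fm (idm C A) = idm D (Fo A))
   \<and> (\<forall>f\<in>mor C. \<forall>g\<in>mor C. cod C f = dom C g \<longrightarrow> Fm (cmp C g f) = cmp D (Fm g) (Fm f))"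

definition nat_iso :: "('o,'m,'x) cat_scheme \<Rightarrow> ('p,'n,'y) cat_scheme \<Rightarrow>
    ('o \<Rightarrow> 'p) \<Rightarrow> ('m \<Rightarrow> 'n) \<Rightarrow> ('o \<Rightarrow> 'p) \<Rightarrow> ('m \<Rightarrow> 'n) \<Rightarrow> ('o \<Rightarrow> 'n) \<Rightarrow> bool" where
  "nat_iso C D Fo Fm Go Gm \<theta> \<longleftrightarrow>
     (\<forall>A\<in>obj C. \<theta> A \<in> hom D (Fo A) (Go A) \<and> iso D (\<theta> A))
   \<and> (\<forall>f\<in>mor C. cmp D (\<theta> (cod C f)) (Fm f) = cmp D (Gm f) (\<theta> (dom C f)))"

definition equivalence :: "('o,'m,'x) cat_scheme \<Rightarrow> ('p,'n,'y) cat_scheme \<Rightarrow>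
    ('o \<Rightarrow> 'p) \<Rightarrow> ('m \<Rightarrow> 'n) \<Rightarrow> bool" where
  "equivalence C D Fo Fm \<longleftrightarrow> functor C D Fo Fm \<and>
     (\<exists>Go Gm \<theta> \<psi>. functor D C Go Gm
        \<and> nat_iso C C (\<lambda>A. A) (\<lambda>f. f) (\<lambda>A. Go (Fo A)) (\<lambda>f. Gm (Fm f)) \<theta>
        \<and> nat_iso D D (\<lambda>B. Fo (Go B)) (\<lambda>g. Fm (Gm g)) (\<lambda>B. B) (\<lambda>g. g) \<psi>)"

record ('o,'m) moncat = "('o,'m) cat" +
  tens :: "'o \<Rightarrow> 'o \<Rightarrow> 'o"
  tensm :: "'m \<Rightarrow> 'm \<Rightarrow> 'm"
  unitob :: "'o"
  assoc :: "'o \<Rightarrow> 'o \<Rightarrow> 'o \<Rightarrow> 'm"   (* (A x B) x E -> A x (B x E) *)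
  lunit :: "'o \<Rightarrow> 'm"                (* 1 x A -> A *)
  runit :: "'o \<Rightarrow> 'm"                (* A x 1 -> A *)

definition monoidal_category :: "('o,'m,'x) moncat_scheme \<Rightarrow> bool" where
  "monoidal_category C \<longleftrightarrow> category C
   \<and> unitob C \<in> obj C
   \<and> (\<forall>A\<in>obj C. \<forall>B\<in>obj C. tens C A B \<in> obj C)
   \<and> (\<forall>f\<in>mor C. \<forall>g\<in>mor C. tensm C f g \<in> hom C (tens C (dom C f) (dom C g)) (tens C (cod C f) (cod C g)))
   \<and> (\<forall>A\<in>obj C. \<forall>B\<in>obj C. tensm C (idm C A) (idm C B) = idm C (tens C A B))
   \<and> (\<forall>f\<in>mor C. \<forall>g\<in>mor C. \<forall>f'\<in>mor C. \<forall>g'\<in>mor C.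
        cod C f = dom C g \<and> cod C f' = dom C g' \<longrightarrow>
        tensm C (cmp C g f) (cmp C g' f') = cmp C (tensm C g g') (tensm C f f'))
   \<and> (\<forall>A\<in>obj C. \<forall>B\<in>obj C. \<forall>E\<in>obj C.
        assoc C A B E \<in> hom C (tens C (tens C A B) E) (tens C A (tens C B E)) \<and> iso C (assoc C A B E))
   \<and> (\<forall>f\<in>mor C. \<forall>g\<in>mor C. \<forall>h\<in>mor C.
        cmp C (assoc C (cod C f) (cod C g) (cod C h)) (tensm C (tensm C f g) h)
        = cmp C (tensm C f (tensm C g h)) (assoc C (dom C f) (dom C g) (dom C h)))
   \<and> (\<forall>A\<in>obj C. lunit C A \<in> hom C (tens C (unitob C) A) A \<and> iso C (lunit C A))
   \<and> (\<forall>A\<in>obj C. runit C A \<in> hom C (tens C A (unitob C)) A \<and> iso C (runit C A))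
   \<and> (\<forall>f\<in>mor C. cmp C (lunit C (cod C f)) (tensm C (idm C (unitob C)) f) = cmp C f (lunit C (dom C f)))
   \<and> (\<forall>f\<in>mor C. cmp C (runit C (cod C f)) (tensm C f (idm C (unitob C))) = cmp C f (runit C (dom C f)))
   \<and> (\<forall>A\<in>obj C. \<forall>B\<in>obj C. \<forall>E\<in>obj C. \<forall>G\<in>obj C.
        cmp C (assoc C A B (tens C E G)) (assoc C (tens C A B) E G)
        = cmp C (tensm C (idm C A) (assoc C B E G))
            (cmp C (assoc C A (tens C B E) G) (tensm C (assoc C A B E) (idm C G))))
   \<and> (\<forall>A\<in>obj C. \<forall>B\<in>obj C.
        cmp C (tensm C (idm C A) (lunit C B)) (assoc C A (unitob C) B) = tensm C (runit C A) (idm C B))"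

definition strict_monoidal :: "('o,'m,'x) moncat_scheme \<Rightarrow> bool" where
  "strict_monoidal C \<longleftrightarrow>
     (\<forall>A\<in>obj C. \<forall>B\<in>obj C. \<forall>E\<in>obj C.
        tens C (tens C A B) E = tens C A (tens C B E) \<and> assoc C A B E = idm C (tens C (tens C A B) E))
   \<and> (\<forall>A\<in>obj C. tens C (unitob C) A = A \<and> lunit C A = idm C A
                \<and> tens C A (unitob C) = A \<and> runit C A = idm C A)"

definition strong_monoidal_functor :: "('o,'m,'x) moncat_scheme \<Rightarrow> ('p,'n,'y) moncat_scheme \<Rightarrow>
    ('o \<Rightarrow> 'p) \<Rightarrow> ('m \<Rightarrow> 'n) \<Rightarrow> 'n \<Rightarrow> ('o \<Rightarrow> 'o \<Rightarrow> 'n) \<Rightarrow> bool" where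
  "strong_monoidal_functor C D Fo Fm u \<eta> \<longleftrightarrow>
     monoidal_category C \<and> monoidal_category D \<and> functor C D Fo Fm
   \<and> u \<in> hom D (unitob D) (Fo (unitob C)) \<and> iso D u
   \<and> (\<forall>A\<in>obj C. \<forall>B\<in>obj C. \<eta> A B \<in> hom D (tens D (Fo A) (Fo B)) (Fo (tens C A B)) \<and> iso D (\<eta> A B))
   \<and> (\<forall>f\<in>mor C. \<forall>g\<in>mor C.
        cmp D (\<eta> (cod C f) (cod C g)) (tensm D (Fm f) (Fm g))
        = cmp D (Fm (tensm C f g)) (\<eta> (dom C f) (dom C g)))
   \<and> (\<forall>A\<in>obj C. \<forall>B\<in>obj C. \<forall>E\<in>obj C.
        cmp D (Fm (assoc C A B E)) (cmp D (\<eta> (tens C A B) E) (tensm D (\<eta> A B) (idm D (Fo E))))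
        = cmp D (\<eta> A (tens C B E)) (cmp D (tensm D (idm D (Fo A)) (\<eta> B E)) (assoc D (Fo A) (Fo B) (Fo E))))
   \<and> (\<forall>A\<in>obj C.
        cmp D (Fm (lunit C A)) (cmp D (\<eta> (unitob C) A) (tensm D u (idm D (Fo A)))) = lunit D (Fo A))
   \<and> (\<forall>A\<in>obj C.
        cmp D (Fm (runit C A)) (cmp D (\<eta> A (unitob C)) (tensm D (idm D (Fo A)) u)) = runit D (Fo A))"

text \<open>Nonempty words are binary trees with leaves = bullets; None is the empty word.\<close>
datatype tree = Leaf | Node tree tree
type_synonym mag = "tree option"

fun tsize :: "tree \<Rightarrow> nat" where
  "tsize Leaf = 1"
| "tsize (Node a b) = tsize a + tsize b"

definition msize :: "mag \<Rightarrow> nat" where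
  "msize t = (case t of None \<Rightarrow> 0 | Some s \<Rightarrow> tsize s)"

fun mprod :: "mag \<Rightarrow> mag \<Rightarrow> mag" where
  "mprod None t = t"
| "mprod s None = s"
| "mprod (Some a) (Some b) = Some (Node a b)"

type_synonym 'o qobj = "'o list \<times> mag"
type_synonym ('o,'m) qmor = "'o qobj \<times> 'o qobj \<times> 'm"

fun tpar :: "('o,'m,'x) moncat_scheme \<Rightarrow> 'o list \<Rightarrow> tree \<Rightarrow> 'o" where
  "tpar C S Leaf = hd S"
| "tpar C S (Node a b) = tens C (tpar C (take (tsize a) S) a) (tpar C (drop (tsize a) S) b)"

definition Par :: "('o,'m,'x) moncat_scheme \<Rightarrow> 'o qobj \<Rightarrow> 'o" where
  "Par C x = (case snd x of None \<Rightarrow> unitob C | Some t \<Rightarrow> tpar C (fst x) t)"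

definition qunit :: "'o qobj" where "qunit = ([], None)"

definition qtens :: "'o qobj \<Rightarrow> 'o qobj \<Rightarrow> 'o qobj" where
  "qtens x y = (fst x @ fst y, mprod (snd x) (snd y))"

definition qphi :: "('o,'m,'x) moncat_scheme \<Rightarrow> 'o qobj \<Rightarrow> 'o qobj \<Rightarrow> 'm" where
  "qphi C x y = (if x = qunit then lunit C (Par C y)
                 else if y = qunit then runit C (Par C x)
                 else idm C (Par C (qtens x y)))"

definition Cq :: "('o,'m,'x) moncat_scheme \<Rightarrow> ('o qobj, ('o,'m) qmor) moncat" where
  "Cq C = \<lparr>
     obj = {x. set (fst x) \<subseteq> obj C \<and> length (fst x) = msize (snd x)},
     mor = {(x, y, f). set (fst x) \<subseteq> obj C \<and> length (fst x) = msize (snd x)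
                     \<and> set (fst y) \<subseteq> obj C \<and> length (fst y) = msize (snd y)
                     \<and> f \<in> hom C (Par C x) (Par C y)},
     dom = (\<lambda>(x, y, f). x),
     cod = (\<lambda>(x, y, f). y),
     cmp = (\<lambda>(y, z, g) (x, y', f). (x, z, cmp C g f)),
     idm = (\<lambda>x. (x, x, idm C (Par C x))),
     tens = qtens,
     tensm = (\<lambda>(x, y, f) (x', y', g). (qtens x x', qtens y y',
                 cmp C (qphi C y y') (cmp C (tensm C f g) (cinv C (qphi C x x'))))),
     unitob = qunit,
     assoc = (\<lambda>x y z. (qtens (qtens x y) z, qtens x (qtens y z),
                 if x = qunit \<or> y = qunit \<or> z = qunit then idm C (Par C (qtens (qtens x y) z))
                 else assoc C (Par C x) (Par C y) (Par C z))),
     lunit = (\<lambda>x. (x, x, idm C (Par C x))),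
     runit = (\<lambda>x. (x, x, idm C (Par C x)))
   \<rparr>"

definition jo :: "'o \<Rightarrow> 'o qobj" where "jo X = ([X], Some Leaf)"

definition jm :: "('o,'m,'x) moncat_scheme \<Rightarrow> 'm \<Rightarrow> ('o,'m) qmor" where
  "jm C f = (jo (dom C f), jo (cod C f), f)"

definition ju :: "('o,'m,'x) moncat_scheme \<Rightarrow> ('o,'m) qmor" where
  "ju C = (qunit, jo (unitob C), idm C (unitob C))"

definition jeta :: "('o,'m,'x) moncat_scheme \<Rightarrow> 'o \<Rightarrow> 'o \<Rightarrow> ('o,'m) qmor" where
  "jeta C X Y = (([X, Y], Some (Node Leaf Leaf)), jo (tens C X Y), idm C (tens C X Y))"

end

theory Submission imports Defs begin

locale MC =
  fixes C :: "('o,'m) moncat"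
  assumes mc: "monoidal_category C"
begin

lemma cat: "category C" using mc by (simp add: monoidal_category_def)

lemma dom_obj[simp]: "f \<in> mor C \<Longrightarrow> dom C f \<in> obj C"
  using cat by (simp add: category_def)
lemma cod_obj[simp]: "f \<in> mor C \<Longrightarrow> cod C f \<in> obj C"
  using cat by (simp add: category_def)
lemma id_mor[simp]: "A \<in> obj C \<Longrightarrow> idm C A \<in> mor C"
  using cat by (simp add: category_def hom_def)
lemma id_dom[simp]: "A \<in> obj C \<Longrightarrow> dom C (idm C A) = A"
  using cat by (simp add: category_def hom_def)
lemma id_cod[simp]: "A \<in> obj C \<Longrightarrow> cod C (idm C A) = A"
  using cat by (simp add: category_def hom_def)
lemma comp_mor[simp]: "f \<in> mor C \<Longrightarrow> g \<in> mor C \<Longrightarrow> cod C f = dom C g \<Longrightarrow> cmp C g f \<in> mor C"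
  using cat by (simp add: category_def hom_def)
lemma comp_dom[simp]: "f \<in> mor C \<Longrightarrow> g \<in> mor C \<Longrightarrow> cod C f = dom C g \<Longrightarrow> dom C (cmp C g f) = dom C f"
  using cat by (simp add: category_def hom_def)
lemma comp_cod[simp]: "f \<in> mor C \<Longrightarrow> g \<in> mor C \<Longrightarrow> cod C f = dom C g \<Longrightarrow> cod C (cmp C g f) = cod C g"
  using cat by (simp add: category_def hom_def)
lemma comp_assoc[simp]: "f \<in> mor C \<Longrightarrow> g \<in> mor C \<Longrightarrow> h \<in> mor C \<Longrightarrow> cod C f = dom C g \<Longrightarrow> cod C g = dom C h
  \<Longrightarrow> cmp C (cmp C h g) f = cmp C h (cmp C g f)"
  using cat unfolding category_def by metis
lemma id_left[simp]: "f \<in> mor C \<Longrightarrow> cod C f = B \<Longrightarrow> cmp C (idm C B) f = f"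
  using cat unfolding category_def by metis
lemma id_right[simp]: "f \<in> mor C \<Longrightarrow> dom C f = A \<Longrightarrow> cmp C f (idm C A) = f"
  using cat unfolding category_def by metis

lemma unit_obj[simp]: "unitob C \<in> obj C" using mc by (simp add: monoidal_category_def)
lemma tens_obj[simp]: "A \<in> obj C \<Longrightarrow> B \<in> obj C \<Longrightarrow> tens C A B \<in> obj C"
  using mc by (simp add: monoidal_category_def)
lemma tensm_mor[simp]: "f \<in> mor C \<Longrightarrow> g \<in> mor C \<Longrightarrow> tensm C f g \<in> mor C"
  using mc by (simp add: monoidal_category_def hom_def)
lemma tensm_dom[simp]: "f \<in> mor C \<Longrightarrow> g \<in> mor C \<Longrightarrow> dom C (tensm C f g) = tens C (dom C f) (dom C g)"
  using mc by (simp add: monoidal_category_def hom_def)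
lemma tensm_cod[simp]: "f \<in> mor C \<Longrightarrow> g \<in> mor C \<Longrightarrow> cod C (tensm C f g) = tens C (cod C f) (cod C g)"
  using mc by (simp add: monoidal_category_def hom_def)
lemma tensm_id[simp]: "A \<in> obj C \<Longrightarrow> B \<in> obj C \<Longrightarrow> tensm C (idm C A) (idm C B) = idm C (tens C A B)"
  using mc by (simp add: monoidal_category_def)
lemma interchange: "f \<in> mor C \<Longrightarrow> g \<in> mor C \<Longrightarrow> f' \<in> mor C \<Longrightarrow> g' \<in> mor C \<Longrightarrow>
        cod C f = dom C g \<Longrightarrow> cod C f' = dom C g' \<Longrightarrow>
        tensm C (cmp C g f) (cmp C g' f') = cmp C (tensm C g g') (tensm C f f')"
  using mc unfolding monoidal_category_def by blast

lemma assoc_mor[simp]: "A \<in> obj C \<Longrightarrow> B \<in> obj C \<Longrightarrow> E \<in> obj C \<Longrightarrow> assoc C A B E \<in> mor C"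
  using mc by (simp add: monoidal_category_def hom_def)
lemma assoc_dom[simp]: "A \<in> obj C \<Longrightarrow> B \<in> obj C \<Longrightarrow> E \<in> obj C \<Longrightarrow> dom C (assoc C A B E) = tens C (tens C A B) E"
  using mc by (simp add: monoidal_category_def hom_def)
lemma assoc_cod[simp]: "A \<in> obj C \<Longrightarrow> B \<in> obj C \<Longrightarrow> E \<in> obj C \<Longrightarrow> cod C (assoc C A B E) = tens C A (tens C B E)"
  using mc by (simp add: monoidal_category_def hom_def)
lemma assoc_iso: "A \<in> obj C \<Longrightarrow> B \<in> obj C \<Longrightarrow> E \<in> obj C \<Longrightarrow> iso C (assoc C A B E)"
  using mc by (simp add: monoidal_category_def hom_def)
lemma assoc_nat: "f \<in> mor C \<Longrightarrow> g \<in> mor C \<Longrightarrow> h \<in> mor C \<Longrightarrow>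
        cmp C (assoc C (cod C f) (cod C g) (cod C h)) (tensm C (tensm C f g) h)
        = cmp C (tensm C f (tensm C g h)) (assoc C (dom C f) (dom C g) (dom C h))"
  using mc unfolding monoidal_category_def by blast
lemma lunit_mor[simp]: "A \<in> obj C \<Longrightarrow> lunit C A \<in> mor C"
  using mc by (simp add: monoidal_category_def hom_def)
lemma lunit_dom[simp]: "A \<in> obj C \<Longrightarrow> dom C (lunit C A) = tens C (unitob C) A"
  using mc by (simp add: monoidal_category_def hom_def)
lemma lunit_cod[simp]: "A \<in> obj C \<Longrightarrow> cod C (lunit C A) = A"
  using mc by (simp add: monoidal_category_def hom_def)
lemma lunit_iso: "A \<in> obj C \<Longrightarrow> iso C (lunit C A)"
  using mc by (simp add: monoidal_category_def hom_def)
lemma runit_mor[simp]: "A \<in> obj C \<Longrightarrow> runit C A \<in> mor C"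
  using mc by (simp add: monoidal_category_def hom_def)
lemma runit_dom[simp]: "A \<in> obj C \<Longrightarrow> dom C (runit C A) = tens C A (unitob C)"
  using mc by (simp add: monoidal_category_def hom_def)
lemma runit_cod[simp]: "A \<in> obj C \<Longrightarrow> cod C (runit C A) = A"
  using mc by (simp add: monoidal_category_def hom_def)
lemma runit_iso: "A \<in> obj C \<Longrightarrow> iso C (runit C A)"
  using mc by (simp add: monoidal_category_def hom_def)
lemma lunit_nat: "f \<in> mor C \<Longrightarrow> cmp C (lunit C (cod C f)) (tensm C (idm C (unitob C)) f) = cmp C f (lunit C (dom C f))"
  using mc unfolding monoidal_category_def by blast
lemma runit_nat: "f \<in> mor C \<Longrightarrow> cmp C (runit C (cod C f)) (tensm C f (idm C (unitob C))) = cmp C f (runit C (dom C f))"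
  using mc unfolding monoidal_category_def by blast
lemma pentagon: "A \<in> obj C \<Longrightarrow> B \<in> obj C \<Longrightarrow> E \<in> obj C \<Longrightarrow> G \<in> obj C \<Longrightarrow>
        cmp C (assoc C A B (tens C E G)) (assoc C (tens C A B) E G)
        = cmp C (tensm C (idm C A) (assoc C B E G))
            (cmp C (assoc C A (tens C B E) G) (tensm C (assoc C A B E) (idm C G)))"
  using mc unfolding monoidal_category_def by blast
lemma triangle: "A \<in> obj C \<Longrightarrow> B \<in> obj C \<Longrightarrow>
        cmp C (tensm C (idm C A) (lunit C B)) (assoc C A (unitob C) B) = tensm C (runit C A) (idm C B)"
  using mc unfolding monoidal_category_def by blast

lemma iso_inv_unique:
  assumes "f \<in> mor C" "g \<in> hom C (cod C f) (dom C f)" "cmp C g f = idm C (dom C f)"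
    "g' \<in> hom C (cod C f) (dom C f)" "cmp C f g' = idm C (cod C f)"
  shows "g = g'"
proof -
  have "g = cmp C g (cmp C f g')" using assms by (simp add: hom_def)
  also have "\<dots> = cmp C (cmp C g f) g'" using assms(1,2,4) comp_assoc[of g' f g] by (simp add: hom_def)
  also have "\<dots> = g'" using assms by (simp add: hom_def)
  finally show ?thesis .
qed

lemma cinv_prop:
  assumes "iso C f"
  shows "cinv C f \<in> hom C (cod C f) (dom C f) \<and> cmp C (cinv C f) f = idm C (dom C f)
      \<and> cmp C f (cinv C f) = idm C (cod C f)"
proof -
  obtain g where g: "g \<in> hom C (cod C f) (dom C f)" "cmp C g f = idm C (dom C f)" "cmp C f g = idm C (cod C f)"
    and f: "f \<in> mor C" using assms unfolding iso_def by blast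
  show ?thesis unfolding cinv_def
    by (rule theI[of _ g]) (use g f iso_inv_unique in blast)+
qed

lemma iso_mor: "iso C f \<Longrightarrow> f \<in> mor C" by (simp add: iso_def)
lemma cinv_mor[simp]: "iso C f \<Longrightarrow> cinv C f \<in> mor C" using cinv_prop by (simp add: hom_def)
lemma cinv_dom[simp]: "iso C f \<Longrightarrow> dom C (cinv C f) = cod C f" using cinv_prop by (simp add: hom_def)
lemma cinv_cod[simp]: "iso C f \<Longrightarrow> cod C (cinv C f) = dom C f" using cinv_prop by (simp add: hom_def)
lemma cinv_left[simp]: "iso C f \<Longrightarrow> cmp C (cinv C f) f = idm C (dom C f)" using cinv_prop by blast
lemma cinv_right[simp]: "iso C f \<Longrightarrow> cmp C f (cinv C f) = idm C (cod C f)" using cinv_prop by blast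
lemma cinv_left2[simp]: "iso C f \<Longrightarrow> x \<in> mor C \<Longrightarrow> cod C x = dom C f \<Longrightarrow> cmp C (cinv C f) (cmp C f x) = x"
  by (subst comp_assoc[symmetric]) (auto simp: iso_mor)
lemma cinv_right2[simp]: "iso C f \<Longrightarrow> x \<in> mor C \<Longrightarrow> cod C x = cod C f \<Longrightarrow> cmp C f (cmp C (cinv C f) x) = x"
  by (subst comp_assoc[symmetric]) (auto simp: iso_mor)

lemma iso_cancel_right:
  assumes "iso C f" "g \<in> mor C" "h \<in> mor C" "dom C g = cod C f" "dom C h = cod C f"
    "cmp C g f = cmp C h f"
  shows "g = h"
proof -
  have "g = cmp C (cmp C g f) (cinv C f)" using assms(1-5) by (simp add: iso_mor)
  also have "\<dots> = h" unfolding assms(6) using assms(1-5) by (simp add: iso_mor)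
  finally show ?thesis .
qed
lemma iso_cancel_left:
  assumes "iso C f" "g \<in> mor C" "h \<in> mor C" "cod C g = dom C f" "cod C h = dom C f"
    "cmp C f g = cmp C f h"
  shows "g = h"
proof -
  have "g = cmp C (cinv C f) (cmp C f g)" using assms(1-5) by (simp add: iso_mor)
  also have "\<dots> = h" unfolding assms(6) using assms(1-5) by (simp add: iso_mor)
  finally show ?thesis .
qed

lemma iso_id[simp]: "A \<in> obj C \<Longrightarrow> iso C (idm C A)"
  unfolding iso_def by (rule conjI, simp, rule bexI[of _ "idm C A"]) (auto simp: hom_def)
lemma iso_cinv: "iso C f \<Longrightarrow> iso C (cinv C f)"
  unfolding iso_def[of C "cinv C f"] by (rule conjI, simp, rule bexI[of _ f]) (auto simp: hom_def iso_mor)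
lemma iso_comp: "iso C f \<Longrightarrow> iso C g \<Longrightarrow> cod C f = dom C g \<Longrightarrow> iso C (cmp C g f)"
  unfolding iso_def[of C "cmp C g f"]
  by (rule conjI, simp add: iso_mor, rule bexI[of _ "cmp C (cinv C f) (cinv C g)"]) (auto simp: hom_def iso_mor)
lemma iso_tensm: "iso C f \<Longrightarrow> iso C g \<Longrightarrow> iso C (tensm C f g)"
  unfolding iso_def[of C "tensm C f g"]
  by (rule conjI, simp add: iso_mor, rule bexI[of _ "tensm C (cinv C f) (cinv C g)"])
     (auto simp: hom_def iso_mor interchange[symmetric])
lemma cinv_id[simp]: "A \<in> obj C \<Longrightarrow> cinv C (idm C A) = idm C A"
proof -
  assume A: "A \<in> obj C"
  have "cmp C (idm C A) (cinv C (idm C A)) = cinv C (idm C A)" by (rule id_left) (use A in auto)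
  then show ?thesis using A cinv_right[of "idm C A"] by simp
qed


lemma reassoc: "cmp C g f = k \<Longrightarrow> f \<in> mor C \<Longrightarrow> g \<in> mor C \<Longrightarrow> x \<in> mor C \<Longrightarrow> cod C x = dom C f \<Longrightarrow>
   cod C f = dom C g \<Longrightarrow> cmp C g (cmp C f x) = cmp C k x"
  using comp_assoc[of x f g] by simp

lemma faithful_r:
  assumes "f \<in> mor C" "g \<in> mor C" "dom C f = dom C g" "cod C f = cod C g"
    "tensm C f (idm C (unitob C)) = tensm C g (idm C (unitob C))"
  shows "f = g"
proof -
  have 1: "cmp C f (runit C (dom C f)) = cmp C (runit C (cod C f)) (tensm C f (idm C (unitob C)))"
    by (rule runit_nat[of f, symmetric, OF assms(1)])
  have 2: "cmp C g (runit C (dom C g)) = cmp C (runit C (cod C g)) (tensm C g (idm C (unitob C)))"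
    by (rule runit_nat[of g, symmetric, OF assms(2)])
  have "cmp C f (runit C (dom C f)) = cmp C g (runit C (dom C f))"
    using 1 2 assms(3,4,5) by simp
  note eq = this
  have o: "dom C f \<in> obj C" using assms by simp
  show ?thesis by (rule iso_cancel_right[OF runit_iso[of "dom C f"]]) (use eq o assms(1-4) in simp_all)
qed

lemma faithful_l:
  assumes "f \<in> mor C" "g \<in> mor C" "dom C f = dom C g" "cod C f = cod C g"
    "tensm C (idm C (unitob C)) f = tensm C (idm C (unitob C)) g"
  shows "f = g"
proof -
  have 1: "cmp C f (lunit C (dom C f)) = cmp C (lunit C (cod C f)) (tensm C (idm C (unitob C)) f)"
    by (rule lunit_nat[of f, symmetric, OF assms(1)])
  have 2: "cmp C g (lunit C (dom C g)) = cmp C (lunit C (cod C g)) (tensm C (idm C (unitob C)) g)"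
    by (rule lunit_nat[of g, symmetric, OF assms(2)])
  have "cmp C f (lunit C (dom C f)) = cmp C g (lunit C (dom C f))"
    using 1 2 assms(3,4,5) by simp
  note eq = this
  have o: "dom C f \<in> obj C" using assms by simp
  show ?thesis by (rule iso_cancel_right[OF lunit_iso[of "dom C f"]]) (use eq o assms(1-4) in simp_all)
qed

lemma kelly_r:
  assumes A: "A \<in> obj C" and B: "B \<in> obj C"
  shows "cmp C (tensm C (idm C A) (runit C B)) (assoc C A B (unitob C)) = runit C (tens C A B)"
proof -
  define E where "E = unitob C"
  have E: "E \<in> obj C" by (simp add: E_def)
  define K where "K = tensm C (idm C A) (tensm C (idm C B) (lunit C E))"
  have Km: "K \<in> mor C" using A B E by (simp add: K_def)
  have Kd: "dom C K = tens C A (tens C B (tens C (unitob C) E))" using A B E by (simp add: K_def)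
  have Kc: "cod C K = tens C A (tens C B E)" using A B E by (simp add: K_def)
  have n1: "cmp C K (assoc C A B (tens C (unitob C) E)) = cmp C (assoc C A B E) (tensm C (idm C (tens C A B)) (lunit C E))"
    using assoc_nat[of "idm C A" "idm C B" "lunit C E"] A B E by (simp add: K_def)
  have t1: "cmp C (tensm C (idm C (tens C A B)) (lunit C E)) (assoc C (tens C A B) (unitob C) E) = tensm C (runit C (tens C A B)) (idm C E)"
    using triangle A B E by simp
  have L: "cmp C K (cmp C (assoc C A B (tens C (unitob C) E)) (assoc C (tens C A B) (unitob C) E))
     = cmp C (assoc C A B E) (tensm C (runit C (tens C A B)) (idm C E))"
    using reassoc[OF n1] t1 A B E Km Kd Kc by simp
  have t2: "cmp C K (tensm C (idm C A) (assoc C B (unitob C) E)) = tensm C (idm C A) (tensm C (runit C B) (idm C E))"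
    unfolding K_def using A B E interchange[of "idm C A" "idm C A" "assoc C B (unitob C) E" "tensm C (idm C B) (lunit C E)"]
      triangle[of B E] by simp
  have n2: "cmp C (tensm C (idm C A) (tensm C (runit C B) (idm C E))) (assoc C A (tens C B (unitob C)) E)
     = cmp C (assoc C A B E) (tensm C (tensm C (idm C A) (runit C B)) (idm C E))"
    using assoc_nat[of "idm C A" "runit C B" "idm C E"] A B E by simp
  have i3: "cmp C (tensm C (tensm C (idm C A) (runit C B)) (idm C E)) (tensm C (assoc C A B (unitob C)) (idm C E))
     = tensm C (cmp C (tensm C (idm C A) (runit C B)) (assoc C A B (unitob C))) (idm C E)"
    using interchange[of "assoc C A B (unitob C)" "tensm C (idm C A) (runit C B)" "idm C E" "idm C E"] A B E by simp
  have R: "cmp C K (cmp C (tensm C (idm C A) (assoc C B (unitob C) E)) (cmp C (assoc C A (tens C B (unitob C)) E) (tensm C (assoc C A B (unitob C)) (idm C E))))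
     = cmp C (assoc C A B E) (tensm C (cmp C (tensm C (idm C A) (runit C B)) (assoc C A B (unitob C))) (idm C E))"
    using reassoc[OF t2] reassoc[OF n2] i3 A B E Km Kd Kc by simp
  have "cmp C (assoc C A B E) (tensm C (runit C (tens C A B)) (idm C E))
      = cmp C (assoc C A B E) (tensm C (cmp C (tensm C (idm C A) (runit C B)) (assoc C A B (unitob C))) (idm C E))"
    using L R pentagon[of A B "unitob C" E] A B E by simp
  then have "tensm C (runit C (tens C A B)) (idm C E) = tensm C (cmp C (tensm C (idm C A) (runit C B)) (assoc C A B (unitob C))) (idm C E)"
    by (rule iso_cancel_left[OF assoc_iso[of A B E], rotated -1]) (use A B E in simp_all)
  then show ?thesis unfolding E_def by (rule faithful_r[symmetric, rotated -1]) (use A B in simp_all)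
qed


lemma kelly_l:
  assumes A: "A \<in> obj C" and B: "B \<in> obj C"
  shows "cmp C (lunit C (tens C A B)) (assoc C (unitob C) A B) = tensm C (lunit C A) (idm C B)"
proof -
  define E where "E = unitob C"
  have E: "E \<in> obj C" by (simp add: E_def)
  define K where "K = tensm C (idm C E) (lunit C (tens C A B))"
  have Km: "K \<in> mor C" using A B E by (simp add: K_def)
  have Kd: "dom C K = tens C E (tens C (unitob C) (tens C A B))" using A B E by (simp add: K_def)
  have Kc: "cod C K = tens C E (tens C A B)" using A B E by (simp add: K_def)
  define M where "M = cmp C (assoc C E (tens C (unitob C) A) B) (tensm C (assoc C E (unitob C) A) (idm C B))"
  have Mi: "iso C M" unfolding M_def using A B E
    by (intro iso_comp iso_tensm assoc_iso iso_id) auto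
  have Mm: "M \<in> mor C" and Md: "dom C M = tens C (tens C (tens C E (unitob C)) A) B"
    and Mc: "cod C M = tens C E (tens C (tens C (unitob C) A) B)"
    using A B E by (auto simp: M_def)
  have t1: "cmp C K (assoc C E (unitob C) (tens C A B)) = tensm C (runit C E) (idm C (tens C A B))"
    using triangle[of E "tens C A B"] A B E by (simp add: K_def)
  have n1: "cmp C (tensm C (runit C E) (idm C (tens C A B))) (assoc C (tens C E (unitob C)) A B)
     = cmp C (assoc C E A B) (tensm C (tensm C (runit C E) (idm C A)) (idm C B))"
    using assoc_nat[of "runit C E" "idm C A" "idm C B"] A B E by simp
  have L: "cmp C K (cmp C (assoc C E (unitob C) (tens C A B)) (assoc C (tens C E (unitob C)) A B))
     = cmp C (assoc C E A B) (tensm C (tensm C (runit C E) (idm C A)) (idm C B))"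
    using reassoc[OF t1] n1 A B E Km Kd Kc by simp
  have t2: "tensm C (tensm C (runit C E) (idm C A)) (idm C B)
      = cmp C (tensm C (tensm C (idm C E) (lunit C A)) (idm C B)) (tensm C (assoc C E (unitob C) A) (idm C B))"
    using triangle[of E A] interchange[of "assoc C E (unitob C) A" "tensm C (idm C E) (lunit C A)" "idm C B" "idm C B"] A B E
    by simp
  have n2: "cmp C (assoc C E A B) (tensm C (tensm C (idm C E) (lunit C A)) (idm C B))
      = cmp C (tensm C (idm C E) (tensm C (lunit C A) (idm C B))) (assoc C E (tens C (unitob C) A) B)"
    using assoc_nat[of "idm C E" "lunit C A" "idm C B"] A B E by simp
  have L2: "cmp C K (cmp C (assoc C E (unitob C) (tens C A B)) (assoc C (tens C E (unitob C)) A B))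
     = cmp C (tensm C (idm C E) (tensm C (lunit C A) (idm C B))) M"
    unfolding L t2 M_def using reassoc[OF n2] A B E by simp
  have i3: "cmp C K (tensm C (idm C E) (assoc C (unitob C) A B))
     = tensm C (idm C E) (cmp C (lunit C (tens C A B)) (assoc C (unitob C) A B))"
    unfolding K_def using interchange[of "idm C E" "idm C E" "assoc C (unitob C) A B" "lunit C (tens C A B)"] A B E by simp
  have R: "cmp C K (cmp C (tensm C (idm C E) (assoc C (unitob C) A B)) M)
     = cmp C (tensm C (idm C E) (cmp C (lunit C (tens C A B)) (assoc C (unitob C) A B))) M"
    using reassoc[OF i3] A B E Km Kd Kc Mm Md Mc by simp
  have "cmp C (tensm C (idm C E) (tensm C (lunit C A) (idm C B))) M
      = cmp C (tensm C (idm C E) (cmp C (lunit C (tens C A B)) (assoc C (unitob C) A B))) M"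
    using L2 R pentagon[of E "unitob C" A B] A B E by (simp add: M_def)
  then have "tensm C (idm C E) (tensm C (lunit C A) (idm C B)) = tensm C (idm C E) (cmp C (lunit C (tens C A B)) (assoc C (unitob C) A B))"
    by (rule iso_cancel_right[OF Mi, rotated -1]) (use A B E Md Mc in simp_all)
  then show ?thesis unfolding E_def by (rule faithful_l[symmetric, rotated -1]) (use A B in simp_all)
qed

lemma lunit_runit_unit: "lunit C (unitob C) = runit C (unitob C)"
proof -
  define I where "I = unitob C"
  have I: "I \<in> obj C" by (simp add: I_def)
  have a: "tensm C (idm C I) (lunit C I) = lunit C (tens C I I)"
  proof -
    have "cmp C (lunit C I) (tensm C (idm C I) (lunit C I)) = cmp C (lunit C I) (lunit C (tens C I I))"
      using lunit_nat[of "lunit C I"] I by (simp add: I_def)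
    then show ?thesis by (rule iso_cancel_left[OF lunit_iso[OF I], rotated -1]) (use I in \<open>simp_all add: I_def\<close>)
  qed
  have "tensm C (lunit C I) (idm C I) = tensm C (runit C I) (idm C I)"
    using kelly_l[of I I] triangle[of I I] a I by (simp add: I_def)
  then show ?thesis unfolding I_def by (rule faithful_r[rotated -1]) simp_all
qed

end

context MC begin

definition qob :: "'o qobj \<Rightarrow> bool" where
  "qob x \<longleftrightarrow> set (fst x) \<subseteq> obj C \<and> length (fst x) = msize (snd x)"

lemma obj_Cq[simp]: "x \<in> obj (Cq C) \<longleftrightarrow> qob x" by (simp add: Cq_def qob_def)
lemma mor_Cq[simp]: "(x,y,f) \<in> mor (Cq C) \<longleftrightarrow> qob x \<and> qob y \<and> f \<in> mor C \<and> dom C f = Par C x \<and> cod C f = Par C y"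
  by (auto simp: Cq_def qob_def hom_def)
lemma dom_Cq[simp]: "dom (Cq C) (x,y,f) = x" by (simp add: Cq_def)
lemma cod_Cq[simp]: "cod (Cq C) (x,y,f) = y" by (simp add: Cq_def)
lemma cmp_Cq[simp]: "cmp (Cq C) (y,z,g) (x,y',f) = (x,z,cmp C g f)" by (simp add: Cq_def)
lemma idm_Cq[simp]: "idm (Cq C) x = (x,x,idm C (Par C x))" by (simp add: Cq_def)
lemma tens_Cq[simp]: "tens (Cq C) = qtens" by (simp add: Cq_def)
lemma unitob_Cq[simp]: "unitob (Cq C) = qunit" by (simp add: Cq_def)
lemma lunit_Cq[simp]: "lunit (Cq C) x = (x,x,idm C (Par C x))" by (simp add: Cq_def)
lemma runit_Cq[simp]: "runit (Cq C) x = (x,x,idm C (Par C x))" by (simp add: Cq_def)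
lemma tensm_Cq[simp]: "tensm (Cq C) (x,y,f) (x',y',g) = (qtens x x', qtens y y',
                 cmp C (qphi C y y') (cmp C (tensm C f g) (cinv C (qphi C x x'))))" by (simp add: Cq_def)
lemma assoc_Cq[simp]: "assoc (Cq C) x y z = (qtens (qtens x y) z, qtens x (qtens y z),
                 if x = qunit \<or> y = qunit \<or> z = qunit then idm C (Par C (qtens (qtens x y) z))
                 else assoc C (Par C x) (Par C y) (Par C z))" by (simp add: Cq_def)

lemma tpar_obj: "set S \<subseteq> obj C \<Longrightarrow> length S = tsize t \<Longrightarrow> tpar C S t \<in> obj C"
proof (induction t arbitrary: S)
  case Leaf
  then show ?case by (cases S) auto
next
  case (Node a b)
  show ?case using Node.prems
    by (simp, intro tens_obj Node.IH) (auto dest: in_set_takeD in_set_dropD)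
qed

lemma Par_obj[simp]: "qob x \<Longrightarrow> Par C x \<in> obj C"
  by (auto simp: qob_def Par_def msize_def intro!: tpar_obj split: option.splits)

lemma qob_qunit[simp]: "qob qunit" by (simp add: qob_def qunit_def msize_def)
lemma Par_qunit[simp]: "Par C qunit = unitob C" by (simp add: Par_def qunit_def)

lemma mprod_None_iff: "mprod s t = None \<longleftrightarrow> s = None \<and> t = None"
  by (cases s; cases t) auto
lemma msize_mprod: "msize (mprod s t) = msize s + msize t"
  by (cases s; cases t) (auto simp: msize_def)
lemma mprod_None_r[simp]: "mprod s None = s" by (cases s) auto

lemma qob_qtens[simp]: "qob x \<Longrightarrow> qob y \<Longrightarrow> qob (qtens x y)"
  by (auto simp: qob_def qtens_def msize_mprod)
lemma qtens_qunit_l[simp]: "qtens qunit x = x" by (simp add: qtens_def qunit_def)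
lemma qtens_qunit_r[simp]: "qtens x qunit = x" by (simp add: qtens_def qunit_def)
lemma qtens_eq_qunit[simp]: "qtens x y = qunit \<longleftrightarrow> x = qunit \<and> y = qunit"
  by (cases x; cases y) (auto simp: qtens_def qunit_def mprod_None_iff)

lemma qob_nonunit: "qob x \<Longrightarrow> x \<noteq> qunit \<Longrightarrow> \<exists>a. snd x = Some a \<and> length (fst x) = tsize a"
  by (cases x) (auto simp: qob_def qunit_def msize_def split: option.splits)

lemma Par_qtens: "qob x \<Longrightarrow> qob y \<Longrightarrow> x \<noteq> qunit \<Longrightarrow> y \<noteq> qunit \<Longrightarrow>
   Par C (qtens x y) = tens C (Par C x) (Par C y)"
  by (drule (1) qob_nonunit)+ (auto simp: Par_def qtens_def)

lemma qphi_l: "qob y \<Longrightarrow> qphi C qunit y = lunit C (Par C y)"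
  by (simp add: qphi_def)
lemma qphi_r: "qob x \<Longrightarrow> qphi C x qunit = runit C (Par C x)"
  by (simp add: qphi_def lunit_runit_unit)
lemma qphi_n: "x \<noteq> qunit \<Longrightarrow> y \<noteq> qunit \<Longrightarrow> qphi C x y = idm C (Par C (qtens x y))"
  by (simp add: qphi_def)

lemma qphi_props:
  assumes "qob x" "qob y"
  shows "qphi C x y \<in> mor C \<and> dom C (qphi C x y) = tens C (Par C x) (Par C y)
      \<and> cod C (qphi C x y) = Par C (qtens x y) \<and> iso C (qphi C x y)"
proof (cases "x = qunit")
  case True then show ?thesis using assms by (simp add: qphi_l lunit_iso)
next
  case F: False
  show ?thesis
  proof (cases "y = qunit")
    case True then show ?thesis using assms by (simp add: qphi_r runit_iso)
  next
    case False then show ?thesis using assms F by (simp add: qphi_n Par_qtens)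
  qed
qed

lemma qphi_mor[simp]: "qob x \<Longrightarrow> qob y \<Longrightarrow> qphi C x y \<in> mor C" using qphi_props by blast
lemma qphi_dom[simp]: "qob x \<Longrightarrow> qob y \<Longrightarrow> dom C (qphi C x y) = tens C (Par C x) (Par C y)" using qphi_props by blast
lemma qphi_cod[simp]: "qob x \<Longrightarrow> qob y \<Longrightarrow> cod C (qphi C x y) = Par C (qtens x y)" using qphi_props by blast
lemma qphi_iso[simp]: "qob x \<Longrightarrow> qob y \<Longrightarrow> iso C (qphi C x y)" using qphi_props by blast

lemma category_Cq: "category (Cq C)"
  unfolding category_def hom_def Ball_def split_paired_All
  by (auto simp del: tens_Cq)


lemma qassoc_unit: "x = qunit \<or> y = qunit \<or> z = qunit \<Longrightarrow> qtens (qtens x y) z = qtens x (qtens y z)"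
  by auto

lemma Par_qtens3: "qob x \<Longrightarrow> qob y \<Longrightarrow> qob z \<Longrightarrow> x \<noteq> qunit \<Longrightarrow> y \<noteq> qunit \<Longrightarrow> z \<noteq> qunit \<Longrightarrow>
   Par C (qtens (qtens x y) z) = tens C (tens C (Par C x) (Par C y)) (Par C z)
 \<and> Par C (qtens x (qtens y z)) = tens C (Par C x) (tens C (Par C y) (Par C z))"
  by (simp add: Par_qtens)

lemma iso_Cq: "(x,y,f) \<in> mor (Cq C) \<Longrightarrow> iso C f \<Longrightarrow> iso (Cq C) (x,y,f)"
  unfolding iso_def[of "Cq C"] hom_def
  by (rule conjI, simp, rule bexI[of _ "(y,x,cinv C f)"]) auto

definition aqC where "aqC x y z = snd (snd (assoc (Cq C) x y z))"

lemma aqC_props: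
  assumes "qob x" "qob y" "qob z"
  shows "aqC x y z \<in> mor C \<and> dom C (aqC x y z) = Par C (qtens (qtens x y) z)
       \<and> cod C (aqC x y z) = Par C (qtens x (qtens y z)) \<and> iso C (aqC x y z)"
proof (cases "x = qunit \<or> y = qunit \<or> z = qunit")
  case True
  then show ?thesis using assms qassoc_unit[OF True] by (simp add: aqC_def)
next
  case False
  then show ?thesis using assms Par_qtens3[OF assms] by (simp add: aqC_def assoc_iso)
qed

lemma mon_tensm_hom: "\<forall>f\<in>mor (Cq C). \<forall>g\<in>mor (Cq C). tensm (Cq C) f g \<in> hom (Cq C) (tens (Cq C) (dom (Cq C) f) (dom (Cq C) g)) (tens (Cq C) (cod (Cq C) f) (cod (Cq C) g))"
  unfolding hom_def Ball_def split_paired_All by auto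

lemma mon_tensm_id: "\<forall>A\<in>obj (Cq C). \<forall>B\<in>obj (Cq C). tensm (Cq C) (idm (Cq C) A) (idm (Cq C) B) = idm (Cq C) (tens (Cq C) A B)"
  by auto

lemma mon_interchange: "\<forall>f\<in>mor (Cq C). \<forall>g\<in>mor (Cq C). \<forall>f'\<in>mor (Cq C). \<forall>g'\<in>mor (Cq C).
        cod (Cq C) f = dom (Cq C) g \<and> cod (Cq C) f' = dom (Cq C) g' \<longrightarrow>
        tensm (Cq C) (cmp (Cq C) g f) (cmp (Cq C) g' f') = cmp (Cq C) (tensm (Cq C) g g') (tensm (Cq C) f f')"
  unfolding Ball_def split_paired_All by (auto simp: interchange)

lemma mon_assoc_hom: "\<forall>A\<in>obj (Cq C). \<forall>B\<in>obj (Cq C). \<forall>E\<in>obj (Cq C).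
        assoc (Cq C) A B E \<in> hom (Cq C) (tens (Cq C) (tens (Cq C) A B) E) (tens (Cq C) A (tens (Cq C) B E)) \<and> iso (Cq C) (assoc (Cq C) A B E)"
proof (intro ballI)
  fix x y z assume xyz: "x \<in> obj (Cq C)" "y \<in> obj (Cq C)" "z \<in> obj (Cq C)"
  have a: "assoc (Cq C) x y z = (qtens (qtens x y) z, qtens x (qtens y z), aqC x y z)"
    by (simp add: aqC_def)
  show "assoc (Cq C) x y z \<in> hom (Cq C) (tens (Cq C) (tens (Cq C) x y) z) (tens (Cq C) x (tens (Cq C) y z)) \<and> iso (Cq C) (assoc (Cq C) x y z)"
    unfolding a using aqC_props[of x y z] xyz by (auto simp: hom_def intro!: iso_Cq)
qed

lemma mon_lunit: "\<forall>A\<in>obj (Cq C). lunit (Cq C) A \<in> hom (Cq C) (tens (Cq C) (unitob (Cq C)) A) A \<and> iso (Cq C) (lunit (Cq C) A)"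
  by (auto simp: hom_def intro!: iso_Cq)
lemma mon_runit: "\<forall>A\<in>obj (Cq C). runit (Cq C) A \<in> hom (Cq C) (tens (Cq C) A (unitob (Cq C))) A \<and> iso (Cq C) (runit (Cq C) A)"
  by (auto simp: hom_def intro!: iso_Cq)

lemma mon_lunit_nat: "\<forall>f\<in>mor (Cq C). cmp (Cq C) (lunit (Cq C) (cod (Cq C) f)) (tensm (Cq C) (idm (Cq C) (unitob (Cq C))) f) = cmp (Cq C) f (lunit (Cq C) (dom (Cq C) f))"
  unfolding Ball_def split_paired_All
proof (intro allI impI)
  fix x y f assume F: "(x, y, f) \<in> mor (Cq C)"
  then have eq: "cmp C (lunit C (Par C y)) (tensm C (idm C (unitob C)) f) = cmp C f (lunit C (Par C x))"
    using lunit_nat[of f] by simp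
  then show "cmp (Cq C) (lunit (Cq C) (cod (Cq C) (x, y, f))) (tensm (Cq C) (idm (Cq C) (unitob (Cq C))) (x, y, f)) =
       cmp (Cq C) (x, y, f) (lunit (Cq C) (dom (Cq C) (x, y, f)))"
    using F reassoc[OF eq] by (simp add: qphi_l lunit_iso)
qed

lemma mon_runit_nat: "\<forall>f\<in>mor (Cq C). cmp (Cq C) (runit (Cq C) (cod (Cq C) f)) (tensm (Cq C) f (idm (Cq C) (unitob (Cq C)))) = cmp (Cq C) f (runit (Cq C) (dom (Cq C) f))"
  unfolding Ball_def split_paired_All
proof (intro allI impI)
  fix x y f assume F: "(x, y, f) \<in> mor (Cq C)"
  then have eq: "cmp C (runit C (Par C y)) (tensm C f (idm C (unitob C))) = cmp C f (runit C (Par C x))"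
    using runit_nat[of f] by simp
  then show "cmp (Cq C) (runit (Cq C) (cod (Cq C) (x, y, f))) (tensm (Cq C) (x, y, f) (idm (Cq C) (unitob (Cq C)))) =
       cmp (Cq C) (x, y, f) (runit (Cq C) (dom (Cq C) (x, y, f)))"
    using F reassoc[OF eq] by (simp add: qphi_r runit_iso)
qed

lemma mon_triangle: "\<forall>A\<in>obj (Cq C). \<forall>B\<in>obj (Cq C).
        cmp (Cq C) (tensm (Cq C) (idm (Cq C) A) (lunit (Cq C) B)) (assoc (Cq C) A (unitob (Cq C)) B) = tensm (Cq C) (runit (Cq C) A) (idm (Cq C) B)"
  by auto


lemma assoc_Cq2[simp]: "assoc (Cq C) x y z = (qtens (qtens x y) z, qtens x (qtens y z), aqC x y z)"
  by (simp add: aqC_def)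
lemma aqC_u1[simp]: "aqC qunit y z = idm C (Par C (qtens y z))" by (simp add: aqC_def)
lemma aqC_u2[simp]: "aqC x qunit z = idm C (Par C (qtens x z))" by (simp add: aqC_def)
lemma aqC_u3[simp]: "aqC x y qunit = idm C (Par C (qtens x y))" by (simp add: aqC_def)
lemma aqC_n[simp]: "x \<noteq> qunit \<Longrightarrow> y \<noteq> qunit \<Longrightarrow> z \<noteq> qunit \<Longrightarrow> aqC x y z = assoc C (Par C x) (Par C y) (Par C z)"
  by (simp add: aqC_def)
declare assoc_Cq[simp del]
lemma aqC_mor[simp]: "qob x \<Longrightarrow> qob y \<Longrightarrow> qob z \<Longrightarrow> aqC x y z \<in> mor C" using aqC_props by blast
lemma aqC_dom[simp]: "qob x \<Longrightarrow> qob y \<Longrightarrow> qob z \<Longrightarrow> dom C (aqC x y z) = Par C (qtens (qtens x y) z)" using aqC_props by blast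
lemma aqC_cod[simp]: "qob x \<Longrightarrow> qob y \<Longrightarrow> qob z \<Longrightarrow> cod C (aqC x y z) = Par C (qtens x (qtens y z))" using aqC_props by blast
lemma aqC_iso[simp]: "qob x \<Longrightarrow> qob y \<Longrightarrow> qob z \<Longrightarrow> iso C (aqC x y z)" using aqC_props by blast

lemma tensm_qunit_l: "(x,y,f) \<in> mor (Cq C) \<Longrightarrow> tensm (Cq C) (qunit, qunit, idm C (unitob C)) (x,y,f) = (x,y,f)"
  using mon_lunit_nat[rule_format, of "(x,y,f)"] by simp
lemma tensm_qunit_r: "(x,y,f) \<in> mor (Cq C) \<Longrightarrow> tensm (Cq C) (x,y,f) (qunit, qunit, idm C (unitob C)) = (x,y,f)"
  using mon_runit_nat[rule_format, of "(x,y,f)"] by simp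

lemma mon_pentagon: "\<forall>A\<in>obj (Cq C). \<forall>B\<in>obj (Cq C). \<forall>E\<in>obj (Cq C). \<forall>G\<in>obj (Cq C).
        cmp (Cq C) (assoc (Cq C) A B (tens (Cq C) E G)) (assoc (Cq C) (tens (Cq C) A B) E G)
        = cmp (Cq C) (tensm (Cq C) (idm (Cq C) A) (assoc (Cq C) B E G))
            (cmp (Cq C) (assoc (Cq C) A (tens (Cq C) B E) G) (tensm (Cq C) (assoc (Cq C) A B E) (idm (Cq C) G)))"
proof (intro ballI)
  fix x y z w assume o: "x \<in> obj (Cq C)" "y \<in> obj (Cq C)" "z \<in> obj (Cq C)" "w \<in> obj (Cq C)"
  then have q: "qob x" "qob y" "qob z" "qob w" by auto
  show "cmp (Cq C) (assoc (Cq C) x y (tens (Cq C) z w)) (assoc (Cq C) (tens (Cq C) x y) z w)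
        = cmp (Cq C) (tensm (Cq C) (idm (Cq C) x) (assoc (Cq C) y z w))
            (cmp (Cq C) (assoc (Cq C) x (tens (Cq C) y z) w) (tensm (Cq C) (assoc (Cq C) x y z) (idm (Cq C) w)))"
  proof (cases "x = qunit")
    case True
    then show ?thesis using q tensm_qunit_l[of "qtens (qtens y z) w" "qtens y (qtens z w)" "aqC y z w"] by simp
  next
    case x: False
    show ?thesis
    proof (cases "y = qunit")
      case True then show ?thesis using q by simp
    next
      case y: False
      show ?thesis
      proof (cases "z = qunit")
        case True then show ?thesis using q by simp
      next
        case z: False
        show ?thesis
        proof (cases "w = qunit")
          case True
          have m: "(qtens (qtens x y) z, qtens x (qtens y z), aqC x y z) \<in> mor (Cq C)"
            using q aqC_props[of x y z] by (simp del: aqC_n)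
          show ?thesis using True q x y z tensm_qunit_r[OF m] by (simp del: aqC_n)
        next
          case w: False
          then show ?thesis using q x y z pentagon[of "Par C x" "Par C y" "Par C z" "Par C w"]
            by (simp add: qphi_n Par_qtens)
        qed
      qed
    qed
  qed
qed


lemma qphi_r': "qob x \<Longrightarrow> x \<noteq> qunit \<Longrightarrow> qphi C x qunit = runit C (Par C x)"
  by (simp add: qphi_def)

definition Phi where "Phi x y z = cmp C (qphi C (qtens x y) z) (tensm C (qphi C x y) (idm C (Par C z)))"
definition Psi where "Psi x y z = cmp C (qphi C x (qtens y z)) (tensm C (idm C (Par C x)) (qphi C y z))"

lemma Phi_props:
  assumes "qob x" "qob y" "qob z"
  shows "Phi x y z \<in> mor C \<and> dom C (Phi x y z) = tens C (tens C (Par C x) (Par C y)) (Par C z)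
     \<and> cod C (Phi x y z) = Par C (qtens (qtens x y) z) \<and> iso C (Phi x y z)"
  using assms by (simp add: Phi_def iso_comp iso_tensm)
lemma Psi_props:
  assumes "qob x" "qob y" "qob z"
  shows "Psi x y z \<in> mor C \<and> dom C (Psi x y z) = tens C (Par C x) (tens C (Par C y) (Par C z))
     \<and> cod C (Psi x y z) = Par C (qtens x (qtens y z)) \<and> iso C (Psi x y z)"
  using assms by (simp add: Psi_def iso_comp iso_tensm)

lemma helper_ll: "Z \<in> obj C \<Longrightarrow> cmp C (lunit C Z) (tensm C (lunit C (unitob C)) (idm C Z))
   = cmp C (lunit C Z) (cmp C (tensm C (idm C (unitob C)) (lunit C Z)) (assoc C (unitob C) (unitob C) Z))"
proof -
  assume Z: "Z \<in> obj C"
  have e: "cmp C (lunit C Z) (tensm C (idm C (unitob C)) (lunit C Z)) = cmp C (lunit C Z) (lunit C (tens C (unitob C) Z))"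
    using lunit_nat[of "lunit C Z"] Z by simp
  show ?thesis using reassoc[OF e] Z kelly_l[of "unitob C" Z] by simp
qed

lemma helper_lr: "Y \<in> obj C \<Longrightarrow> cmp C (runit C Y) (tensm C (lunit C Y) (idm C (unitob C)))
   = cmp C (lunit C Y) (cmp C (tensm C (idm C (unitob C)) (runit C Y)) (assoc C (unitob C) Y (unitob C)))"
proof -
  assume Y: "Y \<in> obj C"
  have e: "cmp C (runit C Y) (tensm C (lunit C Y) (idm C (unitob C))) = cmp C (lunit C Y) (runit C (tens C (unitob C) Y))"
    using runit_nat[of "lunit C Y"] Y by simp
  show ?thesis using e Y kelly_r[of "unitob C" Y] by simp
qed

lemma key:
  assumes q: "qob x" "qob y" "qob z"
  shows "cmp C (aqC x y z) (Phi x y z) = cmp C (Psi x y z) (assoc C (Par C x) (Par C y) (Par C z))"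
proof (cases "x = qunit")
  case x: True
  show ?thesis
  proof (cases "y = qunit")
    case y: True
    show ?thesis
    proof (cases "z = qunit")
      case True then show ?thesis using x y helper_ll[of "unitob C"] by (simp add: Phi_def Psi_def qphi_l)
    next
      case False then show ?thesis using q x y helper_ll[of "Par C z"] by (simp add: Phi_def Psi_def qphi_l)
    qed
  next
    case y: False
    show ?thesis
    proof (cases "z = qunit")
      case True then show ?thesis using q x y helper_lr[of "Par C y"] by (simp add: Phi_def Psi_def qphi_l qphi_r')
    next
      case False then show ?thesis using q x y kelly_l[of "Par C y" "Par C z"]
        by (simp add: Phi_def Psi_def qphi_l qphi_r' qphi_n Par_qtens)
    qed
  qed
next
  case x: False
  show ?thesis
  proof (cases "y = qunit")
    case y: True
    show ?thesis
    proof (cases "z = qunit")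
      case True then show ?thesis using q x y triangle[of "Par C x" "unitob C"] by (simp add: Phi_def Psi_def qphi_l qphi_r')
    next
      case False then show ?thesis using q x y triangle[of "Par C x" "Par C z"]
        by (simp add: Phi_def Psi_def qphi_l qphi_r' qphi_n Par_qtens)
    qed
  next
    case y: False
    show ?thesis
    proof (cases "z = qunit")
      case True then show ?thesis using q x y kelly_r[of "Par C x" "Par C y"]
        by (simp add: Phi_def Psi_def qphi_l qphi_r' qphi_n Par_qtens)
    next
      case False then show ?thesis using q x y
        by (simp add: Phi_def Psi_def qphi_l qphi_r' qphi_n Par_qtens)
    qed
  qed
qed


lemma Phi_mor[simp]: "qob x \<Longrightarrow> qob y \<Longrightarrow> qob z \<Longrightarrow> Phi x y z \<in> mor C" using Phi_props by blast
lemma Phi_dom[simp]: "qob x \<Longrightarrow> qob y \<Longrightarrow> qob z \<Longrightarrow> dom C (Phi x y z) = tens C (tens C (Par C x) (Par C y)) (Par C z)" using Phi_props by blast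
lemma Phi_cod[simp]: "qob x \<Longrightarrow> qob y \<Longrightarrow> qob z \<Longrightarrow> cod C (Phi x y z) = Par C (qtens (qtens x y) z)" using Phi_props by blast
lemma Phi_iso[simp]: "qob x \<Longrightarrow> qob y \<Longrightarrow> qob z \<Longrightarrow> iso C (Phi x y z)" using Phi_props by blast
lemma Psi_mor[simp]: "qob x \<Longrightarrow> qob y \<Longrightarrow> qob z \<Longrightarrow> Psi x y z \<in> mor C" using Psi_props by blast
lemma Psi_dom[simp]: "qob x \<Longrightarrow> qob y \<Longrightarrow> qob z \<Longrightarrow> dom C (Psi x y z) = tens C (Par C x) (tens C (Par C y) (Par C z))" using Psi_props by blast
lemma Psi_cod[simp]: "qob x \<Longrightarrow> qob y \<Longrightarrow> qob z \<Longrightarrow> cod C (Psi x y z) = Par C (qtens x (qtens y z))" using Psi_props by blast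


lemma TPhi:
  assumes F: "(x,x',f) \<in> mor (Cq C)" and G: "(y,y',g) \<in> mor (Cq C)" and H: "(z,z',h) \<in> mor (Cq C)"
  shows "cmp C (snd (snd (tensm (Cq C) (tensm (Cq C) (x,x',f) (y,y',g)) (z,z',h)))) (Phi x y z)
       = cmp C (Phi x' y' z') (tensm C (tensm C f g) h)"
proof -
  have q: "qob x" "qob x'" "qob y" "qob y'" "qob z" "qob z'" "f \<in> mor C" "g \<in> mor C" "h \<in> mor C"
    "dom C f = Par C x" "cod C f = Par C x'" "dom C g = Par C y" "cod C g = Par C y'"
    "dom C h = Par C z" "cod C h = Par C z'" using F G H by auto
  define u where "u = cmp C (qphi C x' y') (cmp C (tensm C f g) (cinv C (qphi C x y)))"
  have um: "u \<in> mor C" "dom C u = Par C (qtens x y)" "cod C u = Par C (qtens x' y')" using q by (auto simp: u_def)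
  have u1: "cmp C u (qphi C x y) = cmp C (qphi C x' y') (tensm C f g)" using q by (simp add: u_def)
  have i1: "cmp C (tensm C u h) (tensm C (qphi C x y) (idm C (Par C z))) = tensm C (cmp C (qphi C x' y') (tensm C f g)) h"
    using interchange[of "qphi C x y" u "idm C (Par C z)" h] q um u1 by simp
  have i2: "tensm C (cmp C (qphi C x' y') (tensm C f g)) h = cmp C (tensm C (qphi C x' y') (idm C (Par C z'))) (tensm C (tensm C f g) h)"
    using interchange[of "tensm C f g" "qphi C x' y'" h "idm C (Par C z')"] q by simp
  have "snd (snd (tensm (Cq C) (tensm (Cq C) (x,x',f) (y,y',g)) (z,z',h)))
     = cmp C (qphi C (qtens x' y') z') (cmp C (tensm C u h) (cinv C (qphi C (qtens x y) z)))"
    by (simp add: u_def)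
  then show ?thesis using q um i1 i2
    by (simp add: Phi_def)
qed

lemma TPsi:
  assumes F: "(x,x',f) \<in> mor (Cq C)" and G: "(y,y',g) \<in> mor (Cq C)" and H: "(z,z',h) \<in> mor (Cq C)"
  shows "cmp C (snd (snd (tensm (Cq C) (x,x',f) (tensm (Cq C) (y,y',g) (z,z',h))))) (Psi x y z)
       = cmp C (Psi x' y' z') (tensm C f (tensm C g h))"
proof -
  have q: "qob x" "qob x'" "qob y" "qob y'" "qob z" "qob z'" "f \<in> mor C" "g \<in> mor C" "h \<in> mor C"
    "dom C f = Par C x" "cod C f = Par C x'" "dom C g = Par C y" "cod C g = Par C y'"
    "dom C h = Par C z" "cod C h = Par C z'" using F G H by auto
  define u where "u = cmp C (qphi C y' z') (cmp C (tensm C g h) (cinv C (qphi C y z)))"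
  have um: "u \<in> mor C" "dom C u = Par C (qtens y z)" "cod C u = Par C (qtens y' z')" using q by (auto simp: u_def)
  have u1: "cmp C u (qphi C y z) = cmp C (qphi C y' z') (tensm C g h)" using q by (simp add: u_def)
  have i1: "cmp C (tensm C f u) (tensm C (idm C (Par C x)) (qphi C y z)) = tensm C f (cmp C (qphi C y' z') (tensm C g h))"
    using interchange[of "idm C (Par C x)" f "qphi C y z" u] q um u1 by simp
  have i2: "tensm C f (cmp C (qphi C y' z') (tensm C g h)) = cmp C (tensm C (idm C (Par C x')) (qphi C y' z')) (tensm C f (tensm C g h))"
    using interchange[of f "idm C (Par C x')" "tensm C g h" "qphi C y' z'"] q by simp
  have "snd (snd (tensm (Cq C) (x,x',f) (tensm (Cq C) (y,y',g) (z,z',h))))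
     = cmp C (qphi C x' (qtens y' z')) (cmp C (tensm C f u) (cinv C (qphi C x (qtens y z))))"
    by (simp add: u_def)
  then show ?thesis using q um i1 i2
    by (simp add: Psi_def)
qed

lemma mon_assoc_nat: "\<forall>f\<in>mor (Cq C). \<forall>g\<in>mor (Cq C). \<forall>h\<in>mor (Cq C).
        cmp (Cq C) (assoc (Cq C) (cod (Cq C) f) (cod (Cq C) g) (cod (Cq C) h)) (tensm (Cq C) (tensm (Cq C) f g) h)
        = cmp (Cq C) (tensm (Cq C) f (tensm (Cq C) g h)) (assoc (Cq C) (dom (Cq C) f) (dom (Cq C) g) (dom (Cq C) h))"
  unfolding Ball_def split_paired_All
proof (intro allI impI)
  fix x x' f y y' g z z' h
  assume F: "(x,x',f) \<in> mor (Cq C)" and G: "(y,y',g) \<in> mor (Cq C)" and H: "(z,z',h) \<in> mor (Cq C)"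
  have q: "qob x" "qob x'" "qob y" "qob y'" "qob z" "qob z'" "f \<in> mor C" "g \<in> mor C" "h \<in> mor C"
    "dom C f = Par C x" "cod C f = Par C x'" "dom C g = Par C y" "cod C g = Par C y'"
    "dom C h = Par C z" "cod C h = Par C z'" using F G H by auto
  define L where "L = snd (snd (tensm (Cq C) (tensm (Cq C) (x,x',f) (y,y',g)) (z,z',h)))"
  define R where "R = snd (snd (tensm (Cq C) (x,x',f) (tensm (Cq C) (y,y',g) (z,z',h))))"
  have Lm: "L \<in> mor C" "dom C L = Par C (qtens (qtens x y) z)" "cod C L = Par C (qtens (qtens x' y') z')"
    using q by (auto simp: L_def)
  have Rm: "R \<in> mor C" "dom C R = Par C (qtens x (qtens y z))" "cod C R = Par C (qtens x' (qtens y' z'))"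
    using q by (auto simp: R_def)
  have L1: "cmp C L (Phi x y z) = cmp C (Phi x' y' z') (tensm C (tensm C f g) h)"
    unfolding L_def by (rule TPhi[OF F G H])
  have R1: "cmp C R (Psi x y z) = cmp C (Psi x' y' z') (tensm C f (tensm C g h))"
    unfolding R_def by (rule TPsi[OF F G H])
  have k: "cmp C (aqC x y z) (Phi x y z) = cmp C (Psi x y z) (assoc C (Par C x) (Par C y) (Par C z))"
    by (rule key) (use q in auto)
  have k': "cmp C (aqC x' y' z') (Phi x' y' z') = cmp C (Psi x' y' z') (assoc C (Par C x') (Par C y') (Par C z'))"
    by (rule key) (use q in auto)
  have an: "cmp C (assoc C (Par C x') (Par C y') (Par C z')) (tensm C (tensm C f g) h)
       = cmp C (tensm C f (tensm C g h)) (assoc C (Par C x) (Par C y) (Par C z))"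
    using assoc_nat[of f g h] q by simp
  have "cmp C (cmp C (aqC x' y' z') L) (Phi x y z) = cmp C (cmp C R (aqC x y z)) (Phi x y z)"
  proof -
    have "cmp C (cmp C (aqC x' y' z') L) (Phi x y z) = cmp C (aqC x' y' z') (cmp C L (Phi x y z))"
      using q Lm by simp
    also have "\<dots> = cmp C (cmp C (aqC x' y' z') (Phi x' y' z')) (tensm C (tensm C f g) h)"
      unfolding L1 using q by simp
    also have "\<dots> = cmp C (Psi x' y' z') (cmp C (tensm C f (tensm C g h)) (assoc C (Par C x) (Par C y) (Par C z)))"
      unfolding k' using q an by simp
    also have "\<dots> = cmp C (cmp C R (Psi x y z)) (assoc C (Par C x) (Par C y) (Par C z))"
      unfolding R1 using q by simp
    also have "\<dots> = cmp C R (cmp C (aqC x y z) (Phi x y z))"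
      unfolding k using q Rm by simp
    also have "\<dots> = cmp C (cmp C R (aqC x y z)) (Phi x y z)"
      using q Rm by simp
    finally show ?thesis .
  qed
  then have "cmp C (aqC x' y' z') L = cmp C R (aqC x y z)"
    by (rule iso_cancel_right[OF Phi_iso[of x y z], rotated -1]) (use q Lm Rm in simp_all)
  then show "cmp (Cq C) (assoc (Cq C) (cod (Cq C) (x, x', f)) (cod (Cq C) (y, y', g)) (cod (Cq C) (z, z', h)))
          (tensm (Cq C) (tensm (Cq C) (x, x', f) (y, y', g)) (z, z', h)) =
         cmp (Cq C) (tensm (Cq C) (x, x', f) (tensm (Cq C) (y, y', g) (z, z', h)))
          (assoc (Cq C) (dom (Cq C) (x, x', f)) (dom (Cq C) (y, y', g)) (dom (Cq C) (z, z', h)))"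
    unfolding L_def R_def by (simp del: tensm_Cq add: tensm_Cq[of x x'] tensm_Cq[of "qtens x y"] tensm_Cq[of y y'] tensm_Cq[of x x' f "qtens y z"])
qed

lemma monoidal_Cq: "monoidal_category (Cq C)"
  unfolding monoidal_category_def
  using category_Cq mon_tensm_hom mon_tensm_id mon_interchange mon_assoc_hom mon_assoc_nat
    mon_lunit mon_runit mon_lunit_nat mon_runit_nat mon_pentagon mon_triangle
  by (simp only: obj_Cq unitob_Cq qob_qunit tens_Cq) (auto simp del: tens_Cq)


lemma qob_jo[simp]: "X \<in> obj C \<Longrightarrow> qob (jo X)" by (simp add: qob_def jo_def msize_def)
lemma jo_ne[simp]: "jo X \<noteq> qunit" by (simp add: jo_def qunit_def)
lemma Par_jo[simp]: "Par C (jo X) = X" by (simp add: jo_def Par_def)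
lemma qtens_jo[simp]: "qtens (jo X) (jo Y) = ([X,Y], Some (Node Leaf Leaf))" by (simp add: jo_def qtens_def)
lemma Par_jo2[simp]: "Par C ([X,Y], Some (Node Leaf Leaf)) = tens C X Y" by (simp add: Par_def)
lemma qob_jo2[simp]: "X \<in> obj C \<Longrightarrow> Y \<in> obj C \<Longrightarrow> qob ([X,Y], Some (Node Leaf Leaf))"
  by (simp add: qob_def msize_def)
lemma ne_qunit2[simp]: "([X,Y], Some (Node Leaf Leaf)) \<noteq> qunit" by (simp add: qunit_def)

lemma not_strict: "obj C \<noteq> {} \<Longrightarrow> \<not> strict_monoidal (Cq C)"
proof
  assume "obj C \<noteq> {}" and s: "strict_monoidal (Cq C)"
  then obtain X where X: "X \<in> obj C" by blast
  have "\<forall>A\<in>obj (Cq C). \<forall>B\<in>obj (Cq C). \<forall>E\<in>obj (Cq C). tens (Cq C) (tens (Cq C) A B) E = tens (Cq C) A (tens (Cq C) B E)"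
    using s unfolding strict_monoidal_def by blast
  then have "qtens (qtens (jo X) (jo X)) (jo X) = qtens (jo X) (qtens (jo X) (jo X))"
    using X by (simp del: qtens_jo)
  then show False by (simp add: jo_def qtens_def)
qed

lemma functor_j: "functor C (Cq C) jo (jm C)"
  unfolding functor_def using cat category_Cq by (auto simp: jm_def hom_def)

lemma strong_j: "strong_monoidal_functor C (Cq C) jo (jm C) (ju C) (jeta C)"
  unfolding strong_monoidal_functor_def
proof (intro conjI ballI)
  show "monoidal_category C" by (rule mc)
  show "monoidal_category (Cq C)" by (rule monoidal_Cq)
  show "functor C (Cq C) jo (jm C)" by (rule functor_j)
  show "ju C \<in> hom (Cq C) (unitob (Cq C)) (jo (unitob C))" by (simp add: ju_def hom_def)
  show "iso (Cq C) (ju C)" unfolding ju_def by (rule iso_Cq) auto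
  fix A B assume A: "A \<in> obj C" and B: "B \<in> obj C"
  show "jeta C A B \<in> hom (Cq C) (tens (Cq C) (jo A) (jo B)) (jo (tens C A B))"
    using A B by (simp add: jeta_def hom_def)
  show "iso (Cq C) (jeta C A B)" unfolding jeta_def using A B by (intro iso_Cq) auto
next
  fix f g assume f: "f \<in> mor C" and g: "g \<in> mor C"
  show "cmp (Cq C) (jeta C (cod C f) (cod C g)) (tensm (Cq C) (jm C f) (jm C g)) =
        cmp (Cq C) (jm C (tensm C f g)) (jeta C (dom C f) (dom C g))"
    using f g by (simp add: jeta_def jm_def qphi_n)
next
  fix A B E assume A: "A \<in> obj C" and B: "B \<in> obj C" and E: "E \<in> obj C"
  show "cmp (Cq C) (jm C (assoc C A B E)) (cmp (Cq C) (jeta C (tens C A B) E) (tensm (Cq C) (jeta C A B) (idm (Cq C) (jo E)))) =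
        cmp (Cq C) (jeta C A (tens C B E)) (cmp (Cq C) (tensm (Cq C) (idm (Cq C) (jo A)) (jeta C B E)) (assoc (Cq C) (jo A) (jo B) (jo E)))"
    using A B E by (simp add: jeta_def jm_def qphi_n Par_qtens)
next
  fix A assume A: "A \<in> obj C"
  show "cmp (Cq C) (jm C (lunit C A)) (cmp (Cq C) (jeta C (unitob C) A) (tensm (Cq C) (ju C) (idm (Cq C) (jo A)))) =
        lunit (Cq C) (jo A)"
    using A by (simp add: jeta_def jm_def ju_def qphi_n qphi_l lunit_iso)
  show "cmp (Cq C) (jm C (runit C A)) (cmp (Cq C) (jeta C A (unitob C)) (tensm (Cq C) (idm (Cq C) (jo A)) (ju C))) =
        runit (Cq C) (jo A)"
    using A by (simp add: jeta_def jm_def ju_def qphi_n qphi_r' runit_iso)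
qed

lemma equiv_j: "equivalence C (Cq C) jo (jm C)"
  unfolding equivalence_def
proof (intro conjI exI)
  show "functor C (Cq C) jo (jm C)" by (rule functor_j)
  show "functor (Cq C) C (Par C) (\<lambda>F. snd (snd F))"
    unfolding functor_def hom_def Ball_def split_paired_All using cat category_Cq by auto
  show "nat_iso C C (\<lambda>A. A) (\<lambda>f. f) (\<lambda>A. Par C (jo A)) (\<lambda>f. snd (snd (jm C f))) (idm C)"
    unfolding nat_iso_def by (auto simp: hom_def jm_def)
  show "nat_iso (Cq C) (Cq C) (\<lambda>B. jo (Par C B)) (\<lambda>g. jm C (snd (snd g))) (\<lambda>B. B) (\<lambda>g. g)
     (\<lambda>x. (jo (Par C x), x, idm C (Par C x)))"
    unfolding nat_iso_def Ball_def split_paired_All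
    by (auto simp: hom_def jm_def intro!: iso_Cq)
qed

end

theorem mainTheorem6:
  fixes C :: "('o, 'm) moncat"
  assumes "monoidal_category C"
  shows "monoidal_category (Cq C)
       \<and> (obj C \<noteq> {} \<longrightarrow> \<not> strict_monoidal (Cq C))
       \<and> strong_monoidal_functor C (Cq C) jo (jm C) (ju C) (jeta C)
       \<and> equivalence C (Cq C) jo (jm C)"
proof -
  interpret MC C by (rule MC.intro) (rule assms)
  show ?thesis using monoidal_Cq not_strict strong_j equiv_j by blast
qed

end
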